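(* Let $f: \mathbb{R}^n \to \mathbb{R}^n$ be topical, $\lambda \in \mathbb{R}$ and $k$ a positive integer. If $S^\lambda(f^k) \neq \emptyset$, then $S^{\lambda/k}(f) \neq \emptyset$.
   Context: $f$ is topical if $f(x+h) = f(x)+h$ for all $h\in\mathbb{R}$ (scalar added to each coordinate) and $x\le y$ componentwise implies $f(x)\le f(y)$. For a map $g$, $S^\lambda(g) = \{x\in\mathbb{R}^n : g(x) \le \lambda + x\}$. *)

theory Defs
  imports "HOL-Analysis.Analysis"
begin

definition add_scalar :: "real ^ 'n \<Rightarrow> real \<Rightarrow> real ^ 'n" where
  "add_scalar x h = (\<chi> i. x $ i + h)"

definition topical :: "(real ^ 'n \<Rightarrow> real ^ 'n) \<Rightarrow> bool" where
  "topical f \<longleftrightarrow>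
     (\<forall>x h. f (add_scalar x h) = add_scalar (f x) h) \<and>
     (\<forall>x y. (\<forall>i. x $ i \<le> y $ i) \<longrightarrow> (\<forall>i. f x $ i \<le> f y $ i))"

definition subeig :: "real \<Rightarrow> (real ^ 'n \<Rightarrow> real ^ 'n) \<Rightarrow> (real ^ 'n) set" where
  "subeig lam g = {x. \<forall>i. g x $ i \<le> lam + x $ i}"

end

theory Submission
  imports Defs
begin

theorem lemma2p2:
  fixes f :: "real ^ 'n \<Rightarrow> real ^ 'n" and lam :: real and k :: nat
  assumes "topical f" and "k > 0" and "subeig lam (f ^^ k) \<noteq> {}"
  shows "subeig (lam / real k) f \<noteq> {}"
proof -
  obtain x where x: "\<And>i. (f ^^ k) x $ i \<le> lam + x $ i"
    using assms(3) unfolding subeig_def by auto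
  define mu where "mu = lam / real k"
  have kmu: "real k * mu = lam" using assms(2) unfolding mu_def by simp
  have tr: "\<And>z h. f (add_scalar z h) = add_scalar (f z) h"
    and mono: "\<And>a b. (\<forall>i. a $ i \<le> b $ i) \<Longrightarrow> (\<forall>i. f a $ i \<le> f b $ i)"
    using assms(1) unfolding topical_def by blast+
  define S where "S i = (\<lambda>j. (f ^^ j) x $ i - real j * mu) ` {..<k}" for i
  define y where "y = (\<chi> i. Min (S i))"
  have finS: "finite (S i)" and neS: "S i \<noteq> {}" for i
    using assms(2) unfolding S_def by auto
  have yle: "y $ i \<le> (f ^^ j) x $ i - real j * mu" if "j < k" for i j
    unfolding y_def using finS neS that by (auto simp: S_def intro!: Min_le)
  have fy: "f y $ i \<le> (f ^^ Suc j) x $ i - real j * mu" if "j < k" for i j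
  proof -
    have "\<forall>i. y $ i \<le> add_scalar ((f ^^ j) x) (- (real j * mu)) $ i"
      using yle[OF that] by (simp add: add_scalar_def)
    then have "f y $ i \<le> f (add_scalar ((f ^^ j) x) (- (real j * mu))) $ i"
      using mono by blast
    also have "\<dots> = (f ^^ Suc j) x $ i - real j * mu"
      by (simp only: tr funpow.simps comp_apply) (simp add: add_scalar_def)
    finally show ?thesis .
  qed
  have "y \<in> subeig mu f"
    unfolding subeig_def
  proof (safe)
    fix i
    have "Min (S i) \<in> S i" using finS neS by (rule Min_in)
    then obtain j0 where j0: "j0 < k" "y $ i = (f ^^ j0) x $ i - real j0 * mu"
      unfolding y_def S_def by auto
    show "f y $ i \<le> mu + y $ i"
    proof (cases j0)
      case 0
      obtain m where m: "k = Suc m" using assms(2) by (cases k) auto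
      have "f y $ i \<le> (f ^^ k) x $ i - real m * mu" using fy[of m i] m by simp
      also have "\<dots> \<le> lam + x $ i - real m * mu" using x[of i] by simp
      also have "\<dots> = mu + y $ i" using j0 0 kmu m by (simp add: algebra_simps)
      finally show ?thesis .
    next
      case (Suc m)
      have "f y $ i \<le> (f ^^ Suc m) x $ i - real m * mu" using fy[of m i] j0 Suc by simp
      also have "\<dots> = mu + y $ i" using j0 Suc by (simp add: algebra_simps)
      finally show ?thesis .
    qed
  qed
  then show ?thesis unfolding mu_def by blast
qed

end
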